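(* Let $\{G_t,t\ge0\}$ be a one-dimensional centered Gaussian process with covariance $R(s,t)=\mathbb{E}(G_sG_t)$, let $\mu\in\mathbb{R}$, $\sigma>0$, and $X_t=\mu t+\sigma G_t$. Let $0<t_1<t_2<\cdots$, and for each $n$ let $\mathbf t=(t_1,\dots,t_n)'$, $\mathbf X=(X_{t_1},\dots,X_{t_n})'$, $\mathbf V=(R(t_i,t_j))_{i,j=1}^n$, and $$\hat\sigma_n^2=\frac1n\,\frac{(\mathbf X'\mathbf V^{-1}\mathbf X)(\mathbf t'\mathbf V^{-1}\mathbf t)-(\mathbf t'\mathbf V^{-1}\mathbf X)^2}{\mathbf t'\mathbf V^{-1}\mathbf t}.$$ Assume that for every $n$ the matrix $\mathbf V$ is strictly positive definite. Then $\hat\sigma_n^2$ is an asymptotically unbiased and $L^2$-consistent estimator of $\sigma^2$, i.e. $\mathbb{E}(\hat\sigma_n^2)\to\sigma^2$ and $\mathbb{E}\big(|\hat\sigma_n^2-\sigma^2|^2\big)\to0$ as $n\to\infty$.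
   Context: $\hat\sigma_n^2$ is the maximum likelihood estimator of $\sigma^2$ based on the discrete observations $\mathbf X$. *)

theory Defs
  imports "HOL-Probability.Probability"
begin

definition centered_gaussian_rv :: "'a measure \<Rightarrow> ('a \<Rightarrow> real) \<Rightarrow> bool" where
  "centered_gaussian_rv M Y \<longleftrightarrow> Y \<in> borel_measurable M \<and>
     ((AE \<omega> in M. Y \<omega> = 0) \<or> (\<exists>s>0. distributed M lborel Y (normal_density 0 s)))"

definition centered_gaussian_process :: "'a measure \<Rightarrow> (real \<Rightarrow> 'a \<Rightarrow> real) \<Rightarrow> bool" where
  "centered_gaussian_process M G \<longleftrightarrow>
     (\<forall>(k::nat) (s::nat \<Rightarrow> real) (c::nat \<Rightarrow> real). (\<forall>i<k. s i \<ge> 0) \<longrightarrow>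
        centered_gaussian_rv M (\<lambda>\<omega>. \<Sum>i<k. c i * G (s i) \<omega>))"

text \<open>n x n real matrices are represented as functions nat => nat => real
  (entries with an index >= n are irrelevant); vectors as nat => real.\<close>

definition strictly_pos_def_mat :: "nat \<Rightarrow> (nat \<Rightarrow> nat \<Rightarrow> real) \<Rightarrow> bool" where
  "strictly_pos_def_mat n V \<longleftrightarrow>
     (\<forall>x::nat \<Rightarrow> real. (\<exists>i<n. x i \<noteq> 0) \<longrightarrow> (\<Sum>i<n. \<Sum>j<n. x i * V i j * x j) > 0)"

definition mat_inv_n :: "nat \<Rightarrow> (nat \<Rightarrow> nat \<Rightarrow> real) \<Rightarrow> (nat \<Rightarrow> nat \<Rightarrow> real)" where
  "mat_inv_n n V = (THE W. (\<forall>i<n. \<forall>j<n. (\<Sum>k<n. V i k * W k j) = (if i = j then 1 else 0))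
                          \<and> (\<forall>i j. (n \<le> i \<or> n \<le> j) \<longrightarrow> W i j = 0))"

definition bilin_n :: "nat \<Rightarrow> (nat \<Rightarrow> nat \<Rightarrow> real) \<Rightarrow> (nat \<Rightarrow> real) \<Rightarrow> (nat \<Rightarrow> real) \<Rightarrow> real" where
  "bilin_n n W x y = (\<Sum>i<n. \<Sum>j<n. x i * W i j * y j)"

text \<open>The estimator; times t_1 < t_2 < ... are t 0 < t 1 < ... (0-based),
  X is the observation vector, R the covariance function.\<close>
definition sigma2_hat :: "(real \<Rightarrow> real \<Rightarrow> real) \<Rightarrow> (nat \<Rightarrow> real) \<Rightarrow> nat \<Rightarrow> (nat \<Rightarrow> real) \<Rightarrow> real" where
  "sigma2_hat R t n X =
     (let W = mat_inv_n n (\<lambda>i j. R (t i) (t j)) in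
      (1 / real n) * ((bilin_n n W X X * bilin_n n W t t - (bilin_n n W t X)\<^sup>2) / bilin_n n W t t))"

end

theory Submission
  imports Defs "Jordan_Normal_Form.Determinant" "HOL-Real_Asymp.Real_Asymp"
begin


lemma gauss_mom:
  assumes P: "prob_space M" and Y: "centered_gaussian_rv M Y"
  shows "integrable M (\<lambda>\<omega>. Y \<omega> ^ 2) \<and> integrable M (\<lambda>\<omega>. Y \<omega> ^ 4) \<and>
         (\<integral>\<omega>. Y \<omega> ^ 4 \<partial>M) = 3 * (\<integral>\<omega>. Y \<omega> ^ 2 \<partial>M)^2"
proof -
  interpret prob_space M by fact
  have meas: "Y \<in> borel_measurable M" using Y unfolding centered_gaussian_rv_def by auto
  show ?thesis
  proof (cases "AE \<omega> in M. Y \<omega> = 0")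
    case True
    have e2: "AE \<omega> in M. Y \<omega> ^ 2 = 0" and e4: "AE \<omega> in M. Y \<omega> ^ 4 = 0" using True by auto
    have i2: "integrable M (\<lambda>\<omega>. Y \<omega> ^ 2)"
      by (rule integrable_cong_AE[THEN iffD2, of _ _ "\<lambda>_. 0"]) (use meas e2 in auto)
    have i4: "integrable M (\<lambda>\<omega>. Y \<omega> ^ 4)"
      by (rule integrable_cong_AE[THEN iffD2, of _ _ "\<lambda>_. 0"]) (use meas e4 in auto)
    have "(\<integral>\<omega>. Y \<omega> ^ 2 \<partial>M) = (\<integral>\<omega>. 0 \<partial>M)" by (rule integral_cong_AE) (use meas e2 in auto)
    moreover have "(\<integral>\<omega>. Y \<omega> ^ 4 \<partial>M) = (\<integral>\<omega>. 0 \<partial>M)" by (rule integral_cong_AE) (use meas e4 in auto)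
    ultimately show ?thesis using i2 i4 by simp
  next
    case False
    then obtain s where s: "s > 0" and D: "distributed M lborel Y (normal_density 0 s)"
      using Y unfolding centered_gaussian_rv_def by auto
    have I: "integrable M (\<lambda>\<omega>. Y \<omega> ^ k)" for k
      using distributed_integrable[OF D, of "\<lambda>x. x ^ k"] integrable_normal_moment[OF s, of 0 k] by simp
    have E: "(\<integral>\<omega>. Y \<omega> ^ (2*k) \<partial>M) = fact (2 * k) / ((2 / s\<^sup>2)^k * fact k)" for k
      using distributed_integral[OF D, of "\<lambda>x. x ^ (2*k)"] integral_normal_moment_even[OF s, of 0 k] by simp
    have e2: "(\<integral>\<omega>. Y \<omega> ^ 2 \<partial>M) = s^2" using E[of 1] s by (simp add: field_simps power2_eq_square)
    have e4: "(\<integral>\<omega>. Y \<omega> ^ 4 \<partial>M) = 3 * s^4" using E[of 2] s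
      by (simp add: field_simps fact_numeral power2_eq_square power4_eq_xxxx)
    have "s^4 = (s^2)^2" by (simp add: power2_eq_square power4_eq_xxxx)
    then show ?thesis using I[of 2] I[of 4] e2 e4 by simp
  qed
qed


lemma inv_exists:
  fixes V :: "nat \<Rightarrow> nat \<Rightarrow> real"
  assumes pd: "strictly_pos_def_mat n V"
  shows "\<exists>W. (\<forall>i<n. \<forall>j<n. (\<Sum>k<n. V i k * W k j) = (if i = j then 1 else 0)) \<and>
             (\<forall>i<n. \<forall>j<n. (\<Sum>k<n. W i k * V k j) = (if i = j then 1 else 0))"
proof -
  define A where "A = mat n n (\<lambda>(i,j). V i j)"
  have A: "A \<in> carrier_mat n n" unfolding A_def by simp
  have "det A \<noteq> 0"
  proof
    assume "det A = 0"
    then obtain v where v: "v \<in> carrier_vec n" "v \<noteq> 0\<^sub>v n" "A *\<^sub>v v = 0\<^sub>v n"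
      using det_0_iff_vec_prod_zero[OF A] by auto
    obtain i where i: "i < n" "v $ i \<noteq> 0" using v(1,2) by (metis eq_vecI carrier_vecD index_zero_vec)
    define x where "x = (\<lambda>i. if i < n then v $ i else 0)"
    have "\<exists>i<n. x i \<noteq> 0" using i unfolding x_def by auto
    with pd have pos: "(\<Sum>i<n. \<Sum>j<n. x i * V i j * x j) > 0" unfolding strictly_pos_def_mat_def by auto
    have row0: "(\<Sum>j<n. V i j * x j) = 0" if "i < n" for i
    proof -
      have "(A *\<^sub>v v) $ i = 0" using v(3) that by simp
      then have "(\<Sum>k = 0..<n. Matrix.vec n (V i) $ k * v $ k) = 0" using that
        using v(1) unfolding A_def by (auto simp add: mult_mat_vec_def scalar_prod_def row_def intro!: sum.cong)
      moreover have "(\<Sum>k = 0..<n. Matrix.vec n (V i) $ k * v $ k) = (\<Sum>j<n. V i j * x j)"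
        unfolding lessThan_atLeast0 x_def by (rule sum.cong) auto
      ultimately show ?thesis by simp
    qed
    have "(\<Sum>i<n. \<Sum>j<n. x i * V i j * x j) = (\<Sum>i<n. x i * (\<Sum>j<n. V i j * x j))"
      by (simp add: sum_distrib_left mult.assoc)
    also have "\<dots> = 0" using row0 by simp
    finally show False using pos by simp
  qed
  from det_non_zero_imp_unit[OF A this, of undefined]
  obtain B where B: "B \<in> carrier_mat n n" "A * B = 1\<^sub>m n" "B * A = 1\<^sub>m n"
    unfolding Units_def ring_mat_def by auto
  define W where "W = (\<lambda>i j. B $$ (i, j))"
  have 1: "(\<Sum>k<n. V i k * W k j) = (if i = j then 1 else 0)" if "i<n" "j<n" for i j
  proof -
    have "(A * B) $$ (i,j) = (if i = j then 1 else 0)" using B(2) that by simp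
    moreover have "(A * B) $$ (i,j) = (\<Sum>k<n. V i k * W k j)" using that B(1) unfolding A_def W_def
      by (auto simp add: index_mult_mat scalar_prod_def lessThan_atLeast0 row_def col_def intro!: sum.cong)
    ultimately show ?thesis by simp
  qed
  have 2: "(\<Sum>k<n. W i k * V k j) = (if i = j then 1 else 0)" if "i<n" "j<n" for i j
  proof -
    have "(B * A) $$ (i,j) = (if i = j then 1 else 0)" using B(3) that by simp
    moreover have "(B * A) $$ (i,j) = (\<Sum>k<n. W i k * V k j)" using that B(1) unfolding A_def W_def
      by (auto simp add: index_mult_mat scalar_prod_def lessThan_atLeast0 row_def col_def intro!: sum.cong)
    ultimately show ?thesis by simp
  qed
  show ?thesis using 1 2 by blast
qed


lemma alg16:
  fixes a p p' b c q q' d x y z w :: real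
  assumes "p' = p" "q' = q"
  shows "(((a + 1 * p + 1 * p' + 1 * 1 * b) * (c + 1 * q + 1 * q' + 1 * 1 * d) + 2 * (x + 1 * y + 1 * z + 1 * 1 * w)\<^sup>2)
   - ((a + 1 * p + 1 * p' + 1 * 1 * b) * (c + (-1) * q + (-1) * q' + (-1) * (-1) * d) + 2 * (x + (-1) * y + 1 * z + 1 * (-1) * w)\<^sup>2)
   - ((a + (-1) * p + (-1) * p' + (-1) * (-1) * b) * (c + 1 * q + 1 * q' + 1 * 1 * d) + 2 * (x + 1 * y + (-1) * z + (-1) * 1 * w)\<^sup>2)
   + ((a + (-1) * p + (-1) * p' + (-1) * (-1) * b) * (c + (-1) * q + (-1) * q' + (-1) * (-1) * d) + 2 * (x + (-1) * y + (-1) * z + (-1) * (-1) * w)\<^sup>2)) / 16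
   = p * q + x * w + y * z"
  unfolding assms by (simp add: algebra_simps power2_eq_square)

locale gfam =
  fixes M :: "'a measure" and F :: "('a \<Rightarrow> real) set"
  assumes P: "prob_space M"
    and G: "\<And>Y. Y \<in> F \<Longrightarrow> centered_gaussian_rv M Y"
    and add: "\<And>Y Z. Y \<in> F \<Longrightarrow> Z \<in> F \<Longrightarrow> (\<lambda>\<omega>. Y \<omega> + Z \<omega>) \<in> F"
    and smul: "\<And>a Y. Y \<in> F \<Longrightarrow> (\<lambda>\<omega>. a * Y \<omega>) \<in> F"
begin

abbreviation E :: "('a \<Rightarrow> real) \<Rightarrow> real" where "E f \<equiv> integral\<^sup>L M f"

lemma diff: "Y \<in> F \<Longrightarrow> Z \<in> F \<Longrightarrow> (\<lambda>\<omega>. Y \<omega> - Z \<omega>) \<in> F"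
  using add[of Y "\<lambda>\<omega>. (-1) * Z \<omega>"] smul[of Z "-1"] by simp

lemma mom: "Y \<in> F \<Longrightarrow> integrable M (\<lambda>\<omega>. Y \<omega> ^ 2) \<and> integrable M (\<lambda>\<omega>. Y \<omega> ^ 4) \<and>
         E (\<lambda>\<omega>. Y \<omega> ^ 4) = 3 * (E (\<lambda>\<omega>. Y \<omega> ^ 2))^2"
  using gauss_mom[OF P G] by blast

lemma pair:
  assumes Y: "Y \<in> F" and Z: "Z \<in> F"
  shows "integrable M (\<lambda>\<omega>. Y \<omega> * Z \<omega>)"
    "integrable M (\<lambda>\<omega>. Y \<omega>^2 * Z \<omega>^2)"
    "E (\<lambda>\<omega>. Y \<omega>^2 * Z \<omega>^2) = E (\<lambda>\<omega>. Y \<omega>^2) * E (\<lambda>\<omega>. Z \<omega>^2) + 2 * (E (\<lambda>\<omega>. Y \<omega> * Z \<omega>))^2"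
proof -
  have Pf: "(\<lambda>\<omega>. Y \<omega> + Z \<omega>) \<in> F" and Qf: "(\<lambda>\<omega>. Y \<omega> - Z \<omega>) \<in> F" using add diff Y Z by auto
  note mY = mom[OF Y] and mZ = mom[OF Z] and mP = mom[OF Pf] and mQ = mom[OF Qf]
  have eYZ: "(\<lambda>\<omega>. Y \<omega> * Z \<omega>) = (\<lambda>\<omega>. ((Y \<omega> + Z \<omega>)^2 - Y \<omega>^2 - Z \<omega>^2) / 2)"
    by (auto simp: power2_eq_square algebra_simps)
  show iYZ: "integrable M (\<lambda>\<omega>. Y \<omega> * Z \<omega>)"
    unfolding eYZ using mY mZ mP by auto
  have eP: "E (\<lambda>\<omega>. (Y \<omega> + Z \<omega>)^2) = E (\<lambda>\<omega>. Y \<omega>^2) + 2 * E (\<lambda>\<omega>. Y \<omega> * Z \<omega>) + E (\<lambda>\<omega>. Z \<omega>^2)"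
  proof -
    have "(\<lambda>\<omega>. (Y \<omega> + Z \<omega>)^2) = (\<lambda>\<omega>. Y \<omega>^2 + 2 * (Y \<omega> * Z \<omega>) + Z \<omega>^2)"
      by (auto simp: power2_eq_square algebra_simps)
    then show ?thesis using mY mZ iYZ by simp
  qed
  have eQ: "E (\<lambda>\<omega>. (Y \<omega> - Z \<omega>)^2) = E (\<lambda>\<omega>. Y \<omega>^2) - 2 * E (\<lambda>\<omega>. Y \<omega> * Z \<omega>) + E (\<lambda>\<omega>. Z \<omega>^2)"
  proof -
    have "(\<lambda>\<omega>. (Y \<omega> - Z \<omega>)^2) = (\<lambda>\<omega>. Y \<omega>^2 - 2 * (Y \<omega> * Z \<omega>) + Z \<omega>^2)"
      by (auto simp: power2_eq_square algebra_simps)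
    then show ?thesis using mY mZ iYZ by simp
  qed
  have e22: "(\<lambda>\<omega>. Y \<omega>^2 * Z \<omega>^2) = (\<lambda>\<omega>. ((Y \<omega> + Z \<omega>)^4 + (Y \<omega> - Z \<omega>)^4 - 2 * Y \<omega>^4 - 2 * Z \<omega>^4) / 12)"
    by (auto simp: fun_eq_iff algebra_simps power2_eq_square power4_eq_xxxx)
  show "integrable M (\<lambda>\<omega>. Y \<omega>^2 * Z \<omega>^2)"
    unfolding e22 using mY mZ mP mQ by auto
  have "E (\<lambda>\<omega>. Y \<omega>^2 * Z \<omega>^2) = (E (\<lambda>\<omega>. (Y \<omega> + Z \<omega>)^4) + E (\<lambda>\<omega>. (Y \<omega> - Z \<omega>)^4)
      - 2 * E (\<lambda>\<omega>. Y \<omega>^4) - 2 * E (\<lambda>\<omega>. Z \<omega>^4)) / 12"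
    unfolding e22 using mY mZ mP mQ by simp
  also have "\<dots> = E (\<lambda>\<omega>. Y \<omega>^2) * E (\<lambda>\<omega>. Z \<omega>^2) + 2 * (E (\<lambda>\<omega>. Y \<omega> * Z \<omega>))^2"
  proof -
    define a where "a = E (\<lambda>\<omega>. Y \<omega>^2)"
    define b where "b = E (\<lambda>\<omega>. Y \<omega> * Z \<omega>)"
    define c where "c = E (\<lambda>\<omega>. Z \<omega>^2)"
    have 1: "E (\<lambda>\<omega>. (Y \<omega> + Z \<omega>)^4) = 3 * (a + 2*b + c)^2" using mP eP unfolding a_def b_def c_def by simp
    have 2: "E (\<lambda>\<omega>. (Y \<omega> - Z \<omega>)^4) = 3 * (a - 2*b + c)^2" using mQ eQ unfolding a_def b_def c_def by simp
    have 3: "E (\<lambda>\<omega>. Y \<omega>^4) = 3 * a^2" "E (\<lambda>\<omega>. Z \<omega>^4) = 3 * c^2" using mY mZ unfolding a_def c_def by auto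
    show ?thesis unfolding 1 2 3 a_def[symmetric] b_def[symmetric] c_def[symmetric] by (simp add: algebra_simps power2_eq_square)
  qed
  finally show "E (\<lambda>\<omega>. Y \<omega>^2 * Z \<omega>^2) = E (\<lambda>\<omega>. Y \<omega>^2) * E (\<lambda>\<omega>. Z \<omega>^2) + 2 * (E (\<lambda>\<omega>. Y \<omega> * Z \<omega>))^2" .
qed

lemma lin4:
  assumes "Y1 \<in> F" "Y2 \<in> F" "Y3 \<in> F" "Y4 \<in> F"
  shows "E (\<lambda>\<omega>. (Y1 \<omega> + s * Y2 \<omega>) * (Y3 \<omega> + u * Y4 \<omega>)) =
    E (\<lambda>\<omega>. Y1 \<omega> * Y3 \<omega>) + u * E (\<lambda>\<omega>. Y1 \<omega> * Y4 \<omega>) + s * E (\<lambda>\<omega>. Y2 \<omega> * Y3 \<omega>) + s * u * E (\<lambda>\<omega>. Y2 \<omega> * Y4 \<omega>)"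
proof -
  have "(\<lambda>\<omega>. (Y1 \<omega> + s * Y2 \<omega>) * (Y3 \<omega> + u * Y4 \<omega>)) =
     (\<lambda>\<omega>. Y1 \<omega> * Y3 \<omega> + u * (Y1 \<omega> * Y4 \<omega>) + s * (Y2 \<omega> * Y3 \<omega>) + (s * u) * (Y2 \<omega> * Y4 \<omega>))"
    by (auto simp: algebra_simps)
  then show ?thesis using pair(1)[OF assms(1,3)] pair(1)[OF assms(1,4)] pair(1)[OF assms(2,3)] pair(1)[OF assms(2,4)]
    by simp
qed

lemma pairm:
  assumes Y: "Y \<in> F" and Z: "Z \<in> F"
  shows "integrable M (\<lambda>\<omega>. (Y \<omega> * Y \<omega>) * (Z \<omega> * Z \<omega>))"
    "E (\<lambda>\<omega>. (Y \<omega> * Y \<omega>) * (Z \<omega> * Z \<omega>)) = E (\<lambda>\<omega>. Y \<omega> * Y \<omega>) * E (\<lambda>\<omega>. Z \<omega> * Z \<omega>) + 2 * (E (\<lambda>\<omega>. Y \<omega> * Z \<omega>))^2"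
  using pair[OF Y Z] by (simp_all add: power2_eq_square)

lemma isserlis:
  assumes Y1: "Y1 \<in> F" and Y2: "Y2 \<in> F" and Y3: "Y3 \<in> F" and Y4: "Y4 \<in> F"
  shows "integrable M (\<lambda>\<omega>. Y1 \<omega> * Y2 \<omega> * Y3 \<omega> * Y4 \<omega>)"
    "E (\<lambda>\<omega>. Y1 \<omega> * Y2 \<omega> * Y3 \<omega> * Y4 \<omega>) =
       E (\<lambda>\<omega>. Y1 \<omega> * Y2 \<omega>) * E (\<lambda>\<omega>. Y3 \<omega> * Y4 \<omega>) + E (\<lambda>\<omega>. Y1 \<omega> * Y3 \<omega>) * E (\<lambda>\<omega>. Y2 \<omega> * Y4 \<omega>)
       + E (\<lambda>\<omega>. Y1 \<omega> * Y4 \<omega>) * E (\<lambda>\<omega>. Y2 \<omega> * Y3 \<omega>)"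
proof -
  define U where "U = (\<lambda>s \<omega>. Y1 \<omega> + s * Y2 \<omega>)"
  define V where "V = (\<lambda>s \<omega>. Y3 \<omega> + s * Y4 \<omega>)"
  have UF: "U s \<in> F" and VF: "V s \<in> F" for s
    unfolding U_def V_def using add smul Y1 Y2 Y3 Y4 by auto
  define P where "P = (\<lambda>s u \<omega>. (U s \<omega> * U s \<omega>) * (V u \<omega> * V u \<omega>))"
  have eq: "(\<lambda>\<omega>. Y1 \<omega> * Y2 \<omega> * Y3 \<omega> * Y4 \<omega>) =
     (\<lambda>\<omega>. (P 1 1 \<omega> - P 1 (-1) \<omega> - P (-1) 1 \<omega> + P (-1) (-1) \<omega>) / 16)"
    unfolding P_def U_def V_def by (auto simp: fun_eq_iff algebra_simps power2_eq_square)
  have iP: "integrable M (P s u)" for s u unfolding P_def using pairm(1)[OF UF VF] .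
  show "integrable M (\<lambda>\<omega>. Y1 \<omega> * Y2 \<omega> * Y3 \<omega> * Y4 \<omega>)" unfolding eq using iP by auto
  have EP: "E (P s u) = E (\<lambda>\<omega>. U s \<omega> * U s \<omega>) * E (\<lambda>\<omega>. V u \<omega> * V u \<omega>) + 2 * (E (\<lambda>\<omega>. U s \<omega> * V u \<omega>))^2" for s u
    unfolding P_def using pairm(2)[OF UF VF] .
  define c where "c = (\<lambda>A B. E (\<lambda>\<omega>. A \<omega> * B \<omega>))"
  have cs: "c A B = c B A" for A B unfolding c_def by (simp add: mult.commute)
  have UU: "E (\<lambda>\<omega>. U s \<omega> * U s \<omega>) = c Y1 Y1 + s * c Y1 Y2 + s * c Y2 Y1 + s * s * c Y2 Y2" for s
    unfolding U_def c_def using lin4[OF Y1 Y2 Y1 Y2] .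
  have VV: "E (\<lambda>\<omega>. V s \<omega> * V s \<omega>) = c Y3 Y3 + s * c Y3 Y4 + s * c Y4 Y3 + s * s * c Y4 Y4" for s
    unfolding V_def c_def using lin4[OF Y3 Y4 Y3 Y4] .
  have UV: "E (\<lambda>\<omega>. U s \<omega> * V u \<omega>) = c Y1 Y3 + u * c Y1 Y4 + s * c Y2 Y3 + s * u * c Y2 Y4" for s u
    unfolding U_def V_def c_def using lin4[OF Y1 Y2 Y3 Y4] .
  have "E (\<lambda>\<omega>. Y1 \<omega> * Y2 \<omega> * Y3 \<omega> * Y4 \<omega>) = (E (P 1 1) - E (P 1 (-1)) - E (P (-1) 1) + E (P (-1) (-1))) / 16"
    unfolding eq using iP by simp
  also have "\<dots> = c Y1 Y2 * c Y3 Y4 + c Y1 Y3 * c Y2 Y4 + c Y1 Y4 * c Y2 Y3"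
    unfolding EP UU VV UV using cs[of Y2 Y1] cs[of Y4 Y3] by (intro alg16)
  finally show "E (\<lambda>\<omega>. Y1 \<omega> * Y2 \<omega> * Y3 \<omega> * Y4 \<omega>) =
       E (\<lambda>\<omega>. Y1 \<omega> * Y2 \<omega>) * E (\<lambda>\<omega>. Y3 \<omega> * Y4 \<omega>) + E (\<lambda>\<omega>. Y1 \<omega> * Y3 \<omega>) * E (\<lambda>\<omega>. Y2 \<omega> * Y4 \<omega>)
       + E (\<lambda>\<omega>. Y1 \<omega> * Y4 \<omega>) * E (\<lambda>\<omega>. Y2 \<omega> * Y3 \<omega>)" unfolding c_def .
qed

lemma sum_right:
  assumes "finite I" "Y \<in> F" "\<And>i. i \<in> I \<Longrightarrow> Z i \<in> F"
  shows "E (\<lambda>\<omega>. Y \<omega> * (\<Sum>i\<in>I. a i * Z i \<omega>)) = (\<Sum>i\<in>I. a i * E (\<lambda>\<omega>. Y \<omega> * Z i \<omega>))"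
proof -
  have "(\<lambda>\<omega>. Y \<omega> * (\<Sum>i\<in>I. a i * Z i \<omega>)) = (\<lambda>\<omega>. \<Sum>i\<in>I. a i * (Y \<omega> * Z i \<omega>))"
    by (auto simp: sum_distrib_left algebra_simps)
  moreover have "integrable M (\<lambda>\<omega>. Y \<omega> * Z i \<omega>)" if "i \<in> I" for i using pair(1)[OF assms(2) assms(3)[OF that]] .
  ultimately show ?thesis by (simp add: Bochner_Integration.integral_sum)
qed

end


lemma moments_n:
  fixes M :: "'a measure" and g :: "nat \<Rightarrow> 'a \<Rightarrow> real" and W :: "nat \<Rightarrow> nat \<Rightarrow> real" and t :: "nat \<Rightarrow> real"
  assumes P: "prob_space M"
    and gp: "\<And>c. centered_gaussian_rv M (\<lambda>\<omega>. \<Sum>i<n. c i * g i \<omega>)"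
    and WV: "\<And>i j. i < n \<Longrightarrow> j < n \<Longrightarrow> (\<Sum>k<n. W i k * integral\<^sup>L M (\<lambda>\<omega>. g k \<omega> * g j \<omega>)) = (if i = j then 1 else 0)"
    and Cne: "bilin_n n W t t \<noteq> 0"
  defines "T \<equiv> (\<lambda>\<omega>. bilin_n n W (\<lambda>i. g i \<omega>) (\<lambda>i. g i \<omega>) - (bilin_n n W t (\<lambda>i. g i \<omega>))^2 / bilin_n n W t t)"
  shows "integrable M T \<and> integrable M (\<lambda>\<omega>. T \<omega> ^ 2) \<and> integral\<^sup>L M T = real n - 1
         \<and> integral\<^sup>L M (\<lambda>\<omega>. T \<omega> ^ 2) = (real n)^2 - 1"
proof -
  define Lf where "Lf = (\<lambda>c \<omega>. \<Sum>i<n. c i * g i \<omega>)"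
  interpret gfam M "range Lf"
  proof (rule gfam.intro)
    show "prob_space M" by fact
    show "centered_gaussian_rv M Y" if "Y \<in> range Lf" for Y using that gp unfolding Lf_def by auto
    show "(\<lambda>\<omega>. Y \<omega> + Z \<omega>) \<in> range Lf" if YF: "Y \<in> range Lf" "Z \<in> range Lf" for Y Z
    proof -
      obtain c d where "Y = Lf c" "Z = Lf d" using YF by blast
      then have "(\<lambda>\<omega>. Y \<omega> + Z \<omega>) = Lf (\<lambda>i. c i + d i)"
        unfolding Lf_def by (auto simp: fun_eq_iff sum.distrib algebra_simps)
      then show ?thesis by simp
    qed
    show "(\<lambda>\<omega>. a * Y \<omega>) \<in> range Lf" if YF: "Y \<in> range Lf" for a Y
    proof -
      obtain c where "Y = Lf c" using YF by blast
      then have "(\<lambda>\<omega>. a * Y \<omega>) = Lf (\<lambda>i. a * c i)"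
        unfolding Lf_def by (auto simp: fun_eq_iff sum_distrib_left algebra_simps)
      then show ?thesis by simp
    qed
  qed
  define V where "V = (\<lambda>i j. E (\<lambda>\<omega>. g i \<omega> * g j \<omega>))"
  have Vs: "V i j = V j i" for i j unfolding V_def by (simp add: mult.commute)
  define h where "h = (\<lambda>i \<omega>. \<Sum>j<n. W i j * g j \<omega>)"
  define C where "C = bilin_n n W t t"
  define B where "B = (\<lambda>\<omega>. \<Sum>i<n. t i * h i \<omega>)"
  define A where "A = (\<lambda>\<omega>. \<Sum>i<n. g i \<omega> * h i \<omega>)"
  have gF: "g i \<in> range Lf" if "i < n" for i
  proof -
    have "(\<Sum>j<n. (if j = i then 1 else 0) * g j \<omega>) = (\<Sum>j<n. if j = i then g j \<omega> else 0)" for \<omega>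
      by (rule sum.cong) auto
    then have "g i = Lf (\<lambda>j. if j = i then 1 else 0)" unfolding Lf_def using that
      by (auto simp: fun_eq_iff)
    then show ?thesis by simp
  qed
  have hF: "h i \<in> range Lf" for i unfolding h_def Lf_def by auto
  have BF: "B \<in> range Lf"
  proof -
    have "B = Lf (\<lambda>j. \<Sum>i<n. t i * W i j)" unfolding B_def h_def Lf_def
      by (auto simp: fun_eq_iff sum_distrib_left sum_distrib_right algebra_simps intro: sum.swap)
    then show ?thesis by simp
  qed
  have Bsym: "bilin_n n W t (\<lambda>i. g i \<omega>) = B \<omega>" for \<omega>
    unfolding bilin_n_def B_def h_def by (simp add: sum_distrib_left algebra_simps)
  have Asym: "bilin_n n W (\<lambda>i. g i \<omega>) (\<lambda>i. g i \<omega>) = A \<omega>" for \<omega>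
    unfolding bilin_n_def A_def h_def by (simp add: sum_distrib_left algebra_simps)
  have Teq: "T = (\<lambda>\<omega>. A \<omega> - (B \<omega>)^2 / C)" unfolding T_def C_def Asym Bsym ..
  have gh: "E (\<lambda>\<omega>. g i \<omega> * h k \<omega>) = (if k = i then 1 else 0)" if "i < n" "k < n" for i k
  proof -
    have "E (\<lambda>\<omega>. g i \<omega> * h k \<omega>) = (\<Sum>j<n. W k j * E (\<lambda>\<omega>. g i \<omega> * g j \<omega>))"
      unfolding h_def by (rule sum_right) (use gF that in auto)
    also have "\<dots> = (\<Sum>j<n. W k j * E (\<lambda>\<omega>. g j \<omega> * g i \<omega>))" by (simp add: mult.commute)
    also have "\<dots> = (if k = i then 1 else 0)" using WV that by simp
    finally show ?thesis .
  qed
  have hg: "E (\<lambda>\<omega>. h k \<omega> * g i \<omega>) = (if k = i then 1 else 0)" if "i < n" "k < n" for i k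
    using gh[OF that] by (simp add: mult.commute)
  have hh: "E (\<lambda>\<omega>. h i \<omega> * h k \<omega>) = W k i" if "i < n" "k < n" for i k
  proof -
    have "E (\<lambda>\<omega>. h i \<omega> * h k \<omega>) = (\<Sum>j<n. W k j * E (\<lambda>\<omega>. h i \<omega> * g j \<omega>))"
      by (subst (2) h_def, rule sum_right) (use gF hF in auto)
    also have "\<dots> = (\<Sum>j<n. W k j * (if i = j then 1 else 0))"
      by (rule sum.cong) (use hg that in auto)
    also have "\<dots> = W k i" using that by (simp add: if_distrib sum.delta cong: if_cong)
    finally show ?thesis .
  qed
  have gB: "E (\<lambda>\<omega>. g i \<omega> * B \<omega>) = t i" if "i < n" for i
  proof -
    have "E (\<lambda>\<omega>. g i \<omega> * B \<omega>) = (\<Sum>k<n. t k * E (\<lambda>\<omega>. g i \<omega> * h k \<omega>))"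
      unfolding B_def by (rule sum_right) (use gF hF that in auto)
    also have "\<dots> = (\<Sum>k<n. t k * (if k = i then 1 else 0))"
      by (rule sum.cong) (use gh that in auto)
    also have "\<dots> = t i" using that by (simp add: if_distrib sum.delta' cong: if_cong)
    finally show ?thesis .
  qed
  have hB: "E (\<lambda>\<omega>. h i \<omega> * B \<omega>) = (\<Sum>k<n. t k * W k i)" if "i < n" for i
  proof -
    have "E (\<lambda>\<omega>. h i \<omega> * B \<omega>) = (\<Sum>k<n. t k * E (\<lambda>\<omega>. h i \<omega> * h k \<omega>))"
      unfolding B_def by (rule sum_right) (use hF in auto)
    also have "\<dots> = (\<Sum>k<n. t k * W k i)"
      by (rule sum.cong) (use hh that in auto)
    finally show ?thesis .
  qed
  have BB: "E (\<lambda>\<omega>. B \<omega> * B \<omega>) = C"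
  proof -
    have "E (\<lambda>\<omega>. B \<omega> * B \<omega>) = (\<Sum>i<n. t i * E (\<lambda>\<omega>. B \<omega> * h i \<omega>))"
      by (subst (2) B_def, rule sum_right) (use hF BF in auto)
    also have "\<dots> = (\<Sum>i<n. t i * (\<Sum>k<n. t k * W k i))"
      by (rule sum.cong) (use hB in \<open>auto simp: mult.commute\<close>)
    also have "\<dots> = C" unfolding C_def bilin_n_def
      by (subst sum.swap) (simp add: sum_distrib_left algebra_simps)
    finally show ?thesis .
  qed
  have gi_hi: "E (\<lambda>\<omega>. g i \<omega> * h i \<omega>) = 1" if "i < n" for i using gh[OF that that] by simp
  have iA: "integrable M A" unfolding A_def using pair(1)[OF gF hF] by auto
  have iBB: "integrable M (\<lambda>\<omega>. B \<omega> * B \<omega>)" using pair(1)[OF BF BF] .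
  have EA: "E A = real n"
  proof -
    have "E A = (\<Sum>i<n. E (\<lambda>\<omega>. g i \<omega> * h i \<omega>))" unfolding A_def
      using pair(1)[OF gF hF] by (simp add: Bochner_Integration.integral_sum)
    also have "\<dots> = (\<Sum>i<n. 1)" by (rule sum.cong) (use gi_hi in auto)
    finally show ?thesis by simp
  qed
  have Teq2: "T = (\<lambda>\<omega>. A \<omega> - (1 / C) * (B \<omega> * B \<omega>))" unfolding Teq by (simp add: power2_eq_square)
  have iT: "integrable M T" unfolding Teq2 using iA iBB by auto
  have ET: "E T = real n - 1" unfolding Teq2 using iA iBB EA BB Cne unfolding C_def by simp
  define Q where "Q = (\<lambda>i k \<omega>. g i \<omega> * h i \<omega> * g k \<omega> * h k \<omega>)"
  have iQ: "integrable M (Q i k)" if "i < n" "k < n" for i k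
    unfolding Q_def using isserlis(1)[OF gF[OF that(1)] hF gF[OF that(2)] hF] .
  have EQ: "E (Q i k) = 1 + V i k * W k i + (if i = k then 1 else 0)" if "i < n" "k < n" for i k
  proof -
    have "E (Q i k) = E (\<lambda>\<omega>. g i \<omega> * h i \<omega>) * E (\<lambda>\<omega>. g k \<omega> * h k \<omega>) + E (\<lambda>\<omega>. g i \<omega> * g k \<omega>) * E (\<lambda>\<omega>. h i \<omega> * h k \<omega>)
       + E (\<lambda>\<omega>. g i \<omega> * h k \<omega>) * E (\<lambda>\<omega>. h i \<omega> * g k \<omega>)"
      unfolding Q_def using isserlis(2)[OF gF[OF that(1)] hF gF[OF that(2)] hF] .
    then show ?thesis using gi_hi that gh[OF that(1,2)] hg[OF that(2,1)] hh[OF that] unfolding V_def by auto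
  qed
  have AA: "(\<lambda>\<omega>. A \<omega> * A \<omega>) = (\<lambda>\<omega>. \<Sum>i<n. \<Sum>k<n. Q i k \<omega>)"
    unfolding A_def Q_def by (auto simp: fun_eq_iff sum_distrib_left sum_distrib_right algebra_simps)
  have iQs: "integrable M (\<lambda>\<omega>. \<Sum>k<n. Q i k \<omega>)" if "i < n" for i
    by (rule Bochner_Integration.integrable_sum) (use iQ that in auto)
  have iAA: "integrable M (\<lambda>\<omega>. A \<omega> * A \<omega>)" unfolding AA by (rule Bochner_Integration.integrable_sum) (use iQs in auto)
  have trVW: "(\<Sum>i<n. \<Sum>k<n. V i k * W k i) = real n"
  proof -
    have "(\<Sum>i<n. \<Sum>k<n. V i k * W k i) = (\<Sum>k<n. \<Sum>i<n. W k i * V i k)"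
      by (subst sum.swap) (simp add: mult.commute)
    also have "\<dots> = (\<Sum>k<n. 1)" by (rule sum.cong) (use WV in \<open>auto simp: V_def\<close>)
    finally show ?thesis by simp
  qed
  have EAA: "E (\<lambda>\<omega>. A \<omega> * A \<omega>) = (real n)^2 + 2 * real n"
  proof -
    have "E (\<lambda>\<omega>. A \<omega> * A \<omega>) = (\<Sum>i<n. E (\<lambda>\<omega>. \<Sum>k<n. Q i k \<omega>))" unfolding AA
      by (rule Bochner_Integration.integral_sum) (use iQs in auto)
    also have "\<dots> = (\<Sum>i<n. \<Sum>k<n. E (Q i k))"
      by (rule sum.cong, simp, rule Bochner_Integration.integral_sum) (use iQ in auto)
    also have "\<dots> = (\<Sum>i<n. \<Sum>k<n. 1 + V i k * W k i + (if i = k then 1 else 0))"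
      by (rule sum.cong, simp, rule sum.cong) (use EQ in auto)
    also have "\<dots> = (real n)^2 + (\<Sum>i<n. \<Sum>k<n. V i k * W k i) + real n"
      by (simp add: sum.distrib power2_eq_square)
    finally show ?thesis using trVW by simp
  qed
  define Rr where "Rr = (\<lambda>i \<omega>. g i \<omega> * h i \<omega> * B \<omega> * B \<omega>)"
  have iRr: "integrable M (Rr i)" if "i < n" for i
    unfolding Rr_def using isserlis(1)[OF gF[OF that] hF BF BF] .
  have ERr: "E (Rr i) = C + 2 * (t i * (\<Sum>k<n. t k * W k i))" if "i < n" for i
  proof -
    have "E (Rr i) = E (\<lambda>\<omega>. g i \<omega> * h i \<omega>) * E (\<lambda>\<omega>. B \<omega> * B \<omega>) + E (\<lambda>\<omega>. g i \<omega> * B \<omega>) * E (\<lambda>\<omega>. h i \<omega> * B \<omega>)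
       + E (\<lambda>\<omega>. g i \<omega> * B \<omega>) * E (\<lambda>\<omega>. h i \<omega> * B \<omega>)"
      unfolding Rr_def using isserlis(2)[OF gF[OF that] hF BF BF] .
    then show ?thesis using gi_hi[OF that] BB gB[OF that] hB[OF that] by simp
  qed
  have ABB: "(\<lambda>\<omega>. A \<omega> * (B \<omega> * B \<omega>)) = (\<lambda>\<omega>. \<Sum>i<n. Rr i \<omega>)"
    unfolding A_def Rr_def by (auto simp: fun_eq_iff sum_distrib_left sum_distrib_right algebra_simps)
  have iABB: "integrable M (\<lambda>\<omega>. A \<omega> * (B \<omega> * B \<omega>))" unfolding ABB by (rule Bochner_Integration.integrable_sum) (use iRr in auto)
  have EABB: "E (\<lambda>\<omega>. A \<omega> * (B \<omega> * B \<omega>)) = real n * C + 2 * C"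
  proof -
    have "E (\<lambda>\<omega>. A \<omega> * (B \<omega> * B \<omega>)) = (\<Sum>i<n. E (Rr i))" unfolding ABB
      by (rule Bochner_Integration.integral_sum) (use iRr in auto)
    also have "\<dots> = (\<Sum>i<n. C + 2 * (t i * (\<Sum>k<n. t k * W k i)))"
      by (rule sum.cong) (use ERr in auto)
    also have "\<dots> = real n * C + 2 * (\<Sum>i<n. t i * (\<Sum>k<n. t k * W k i))"
      by (simp add: sum.distrib sum_distrib_left)
    also have "(\<Sum>i<n. t i * (\<Sum>k<n. t k * W k i)) = C" unfolding C_def bilin_n_def
      by (subst sum.swap) (simp add: sum_distrib_left algebra_simps)
    finally show ?thesis .
  qed
  have iB4: "integrable M (\<lambda>\<omega>. B \<omega> * B \<omega> * B \<omega> * B \<omega>)" using isserlis(1)[OF BF BF BF BF] .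
  have EB4: "E (\<lambda>\<omega>. B \<omega> * B \<omega> * B \<omega> * B \<omega>) = 3 * C^2"
    using isserlis(2)[OF BF BF BF BF] BB by (simp add: power2_eq_square)
  have T2: "(\<lambda>\<omega>. T \<omega> ^ 2) = (\<lambda>\<omega>. A \<omega> * A \<omega> - (2 / C) * (A \<omega> * (B \<omega> * B \<omega>)) + (1 / C^2) * (B \<omega> * B \<omega> * B \<omega> * B \<omega>))"
    unfolding Teq using Cne unfolding C_def[symmetric] by (auto simp: fun_eq_iff field_simps power2_eq_square)
  have iT2: "integrable M (\<lambda>\<omega>. T \<omega> ^ 2)" unfolding T2 using iAA iABB iB4 by auto
  have ET2: "E (\<lambda>\<omega>. T \<omega> ^ 2) = (real n)^2 - 1"
  proof -
    have "E (\<lambda>\<omega>. T \<omega> ^ 2) = ((real n)^2 + 2 * real n) - (2 / C) * (real n * C + 2 * C) + (1 / C^2) * (3 * C^2)"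
      unfolding T2 using iAA iABB iB4 EAA EABB EB4 by simp
    also have "\<dots> = (real n)^2 - 1" using Cne unfolding C_def[symmetric] by (simp add: field_simps power2_eq_square)
    finally show ?thesis .
  qed
  show ?thesis using iT iT2 ET ET2 by simp
qed


lemma delta_sum1: "i < (n::nat) \<Longrightarrow> (\<Sum>k<n. (if i = k then 1 else 0) * f k) = (f i :: real)"
proof -
  assume i: "i < n"
  have "(\<Sum>k<n. (if i = k then 1 else 0) * f k) = (\<Sum>k<n. if i = k then f k else 0)" by (rule sum.cong) auto
  also have "\<dots> = f i" using i by (subst sum.delta') auto
  finally show ?thesis .
qed

lemma delta_sum2: "j < (n::nat) \<Longrightarrow> (\<Sum>k<n. f k * (if k = j then 1 else 0)) = (f j :: real)"
proof -
  assume j: "j < n"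
  have "(\<Sum>k<n. f k * (if k = j then 1 else 0)) = (\<Sum>k<n. if k = j then f k else 0)" by (rule sum.cong) auto
  also have "\<dots> = f j" using j by (subst sum.delta) auto
  finally show ?thesis .
qed

lemma inv_props:
  fixes V :: "nat \<Rightarrow> nat \<Rightarrow> real"
  assumes pd: "strictly_pos_def_mat n V"
  shows "(\<forall>i<n. \<forall>j<n. (\<Sum>k<n. V i k * mat_inv_n n V k j) = (if i = j then 1 else 0)) \<and>
         (\<forall>i<n. \<forall>j<n. (\<Sum>k<n. mat_inv_n n V i k * V k j) = (if i = j then 1 else 0))"
proof -
  obtain W0 where W0: "\<And>i j. i<n \<Longrightarrow> j<n \<Longrightarrow> (\<Sum>k<n. V i k * W0 k j) = (if i = j then 1 else 0)"
     "\<And>i j. i<n \<Longrightarrow> j<n \<Longrightarrow> (\<Sum>k<n. W0 i k * V k j) = (if i = j then 1 else 0)"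
    using inv_exists[OF pd] by blast
  define W1 where "W1 = (\<lambda>i j. if i < n \<and> j < n then W0 i j else 0)"
  have s1: "(\<Sum>k<n. V i k * W1 k j) = (\<Sum>k<n. V i k * W0 k j)" if "j < n" for i j
    by (rule sum.cong) (use that in \<open>auto simp: W1_def\<close>)
  have s2: "(\<Sum>k<n. W1 i k * V k j) = (\<Sum>k<n. W0 i k * V k j)" if "i < n" for i j
    by (rule sum.cong) (use that in \<open>auto simp: W1_def\<close>)
  have R1: "\<forall>i<n. \<forall>j<n. (\<Sum>k<n. V i k * W1 k j) = (if i = j then 1 else 0)" using s1 W0(1) by simp
  have L1: "\<forall>i<n. \<forall>j<n. (\<Sum>k<n. W1 i k * V k j) = (if i = j then 1 else 0)" using s2 W0(2) by simp
  have pad: "\<forall>i j. (n \<le> i \<or> n \<le> j) \<longrightarrow> W1 i j = 0" unfolding W1_def by auto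
  have uniq: "W' = W1" if "(\<forall>i<n. \<forall>j<n. (\<Sum>k<n. V i k * W' k j) = (if i = j then 1 else 0))
                          \<and> (\<forall>i j. (n \<le> i \<or> n \<le> j) \<longrightarrow> W' i j = 0)" for W'
  proof (intro ext)
    fix i j
    show "W' i j = W1 i j"
    proof (cases "i < n \<and> j < n")
      case True
      have "(\<Sum>l<n. W1 i l * (\<Sum>k<n. V l k * W' k j)) = (\<Sum>l<n. W1 i l * (if l = j then 1 else 0))"
        by (rule sum.cong) (use that True in auto)
      also have "\<dots> = W1 i j" using True by (rule delta_sum2[OF conjunct2])
      finally have a: "(\<Sum>l<n. W1 i l * (\<Sum>k<n. V l k * W' k j)) = W1 i j" .
      have "(\<Sum>l<n. W1 i l * (\<Sum>k<n. V l k * W' k j)) = (\<Sum>k<n. (\<Sum>l<n. W1 i l * V l k) * W' k j)"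
        unfolding sum_distrib_left sum_distrib_right mult.assoc by (rule sum.swap)
      also have "\<dots> = (\<Sum>k<n. (if i = k then 1 else 0) * W' k j)"
        by (rule sum.cong) (use L1 True in auto)
      also have "\<dots> = W' i j" using True by (rule delta_sum1[OF conjunct1])
      finally show ?thesis using a by simp
    next
      case False
      then show ?thesis using that pad by auto
    qed
  qed
  have "mat_inv_n n V = W1" unfolding mat_inv_n_def
  proof (rule the_equality)
    show "(\<forall>i<n. \<forall>j<n. (\<Sum>k<n. V i k * W1 k j) = (if i = j then 1 else 0)) \<and>
          (\<forall>i j. (n \<le> i \<or> n \<le> j) \<longrightarrow> W1 i j = 0)" using R1 pad by blast
  next
    fix W' assume "(\<forall>i<n. \<forall>j<n. (\<Sum>k<n. V i k * W' k j) = (if i = j then 1 else 0)) \<and>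
          (\<forall>i j. (n \<le> i \<or> n \<le> j) \<longrightarrow> W' i j = 0)"
    then show "W' = W1" by (rule uniq)
  qed
  then show ?thesis using R1 L1 by simp
qed


lemma bilin_lin_right: "bilin_n n W u (\<lambda>i. a * x i + b * y i) = a * bilin_n n W u x + b * bilin_n n W u y"
  unfolding bilin_n_def by (simp add: sum.distrib sum_distrib_left algebra_simps)

lemma bilin_lin_left: "bilin_n n W (\<lambda>i. a * x i + b * y i) v = a * bilin_n n W x v + b * bilin_n n W y v"
  unfolding bilin_n_def by (simp add: sum.distrib sum_distrib_left algebra_simps)

lemma bilin_sym:
  assumes "\<And>i j. i < n \<Longrightarrow> j < n \<Longrightarrow> W i j = W j i"
  shows "bilin_n n W x y = bilin_n n W y x"
proof -
  have "bilin_n n W x y = (\<Sum>j<n. \<Sum>i<n. x i * W i j * y j)" unfolding bilin_n_def by (rule sum.swap)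
  also have "\<dots> = bilin_n n W y x" unfolding bilin_n_def
    by (intro sum.cong refl) (use assms in \<open>auto simp: mult.commute mult.left_commute\<close>)
  finally show ?thesis .
qed

lemma W_sym:
  fixes V W :: "nat \<Rightarrow> nat \<Rightarrow> real"
  assumes Vs: "\<And>i j. V i j = V j i"
    and VW: "\<forall>i<n. \<forall>j<n. (\<Sum>k<n. V i k * W k j) = (if i = j then 1 else 0)"
    and i: "i < n" and j: "j < n"
  shows "W i j = W j i"
proof -
  have c1: "(\<Sum>k<n. W k i * V k l) = (if i = l then 1 else 0)" if "l < n" for l
  proof -
    have "(\<Sum>k<n. W k i * V k l) = (\<Sum>k<n. V l k * W k i)" by (simp add: Vs mult.commute)
    then show ?thesis using VW that i by auto
  qed
  have "(\<Sum>l<n. (\<Sum>k<n. W k i * V k l) * W l j) = (\<Sum>l<n. (if i = l then 1 else 0) * W l j)"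
    by (rule sum.cong) (use c1 in auto)
  also have "\<dots> = W i j" using i by (rule delta_sum1)
  finally have a: "(\<Sum>l<n. (\<Sum>k<n. W k i * V k l) * W l j) = W i j" .
  have "(\<Sum>l<n. (\<Sum>k<n. W k i * V k l) * W l j) = (\<Sum>k<n. W k i * (\<Sum>l<n. V k l * W l j))"
    unfolding sum_distrib_left sum_distrib_right mult.assoc by (rule sum.swap)
  also have "\<dots> = (\<Sum>k<n. W k i * (if k = j then 1 else 0))"
    by (rule sum.cong) (use VW j in auto)
  also have "\<dots> = W j i" using j by (rule delta_sum2)
  finally show ?thesis using a by simp
qed

lemma C_pos:
  fixes V W :: "nat \<Rightarrow> nat \<Rightarrow> real"
  assumes pd: "strictly_pos_def_mat n V"
    and VW: "\<forall>i<n. \<forall>j<n. (\<Sum>k<n. V i k * W k j) = (if i = j then 1 else 0)"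
    and n: "0 < n" and t0: "t 0 \<noteq> 0"
  shows "bilin_n n W t t > 0"
proof -
  define y where "y = (\<lambda>k. \<Sum>j<n. W k j * t j)"
  have Vy: "(\<Sum>l<n. V k l * y l) = t k" if "k < n" for k
  proof -
    have "(\<Sum>l<n. V k l * y l) = (\<Sum>j<n. (\<Sum>l<n. V k l * W l j) * t j)"
      unfolding y_def sum_distrib_left sum_distrib_right mult.assoc by (rule sum.swap)
    also have "\<dots> = (\<Sum>j<n. (if k = j then 1 else 0) * t j)" by (rule sum.cong) (use VW that in auto)
    also have "\<dots> = t k" using that by (rule delta_sum1)
    finally show ?thesis .
  qed
  have "\<exists>i<n. y i \<noteq> 0"
  proof (rule ccontr)
    assume "\<not> ?thesis"
    then have "(\<Sum>l<n. V 0 l * y l) = 0" by simp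
    then show False using Vy[OF n] t0 by simp
  qed
  then have pos: "(\<Sum>i<n. \<Sum>j<n. y i * V i j * y j) > 0" using pd unfolding strictly_pos_def_mat_def by blast
  have "(\<Sum>i<n. \<Sum>j<n. y i * V i j * y j) = (\<Sum>i<n. y i * t i)"
    by (rule sum.cong) (use Vy in \<open>auto simp: sum_distrib_left[symmetric] mult.assoc\<close>)
  also have "\<dots> = bilin_n n W t t" unfolding bilin_n_def y_def
    by (simp add: sum_distrib_left sum_distrib_right algebra_simps)
  finally show ?thesis using pos by simp
qed


lemma key_n:
  fixes M :: "'a measure" and G :: "real \<Rightarrow> 'a \<Rightarrow> real"
    and \<mu> \<sigma> :: real and t :: "nat \<Rightarrow> real"
  assumes "prob_space M"
    and "centered_gaussian_process M G"
    and "R = (\<lambda>s u. prob_space.expectation M (\<lambda>\<omega>. G s \<omega> * G u \<omega>))"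
    and "\<sigma> > 0"
    and "X = (\<lambda>s \<omega>. \<mu> * s + \<sigma> * G s \<omega>)"
    and "t 0 > 0" and "strict_mono t"
    and "\<And>n. strictly_pos_def_mat n (\<lambda>i j. R (t i) (t j))"
    and "S = (\<lambda>n \<omega>. sigma2_hat R t n (\<lambda>i. X (t i) \<omega>))"
    and n: "n > 0"
  shows "prob_space.expectation M (S n) = \<sigma>\<^sup>2 * (real n - 1) / real n \<and>
     prob_space.expectation M (\<lambda>\<omega>. \<bar>S n \<omega> - \<sigma>\<^sup>2\<bar>\<^sup>2) = \<sigma>^4 * (2 * real n - 1) / (real n)^2"

proof -
  interpret prob_space M by fact
  have tpos: "t i > 0" for i
  proof -
    have "t 0 \<le> t i" using strict_mono_mono[OF assms(7)] by (simp add: monoD)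
    then show ?thesis using assms(6) by simp
  qed
  define g where "g = (\<lambda>i \<omega>. G (t i) \<omega>)"
  define V where "V = (\<lambda>i j. R (t i) (t j))"
  have VE: "V i j = integral\<^sup>L M (\<lambda>\<omega>. g i \<omega> * g j \<omega>)" for i j unfolding V_def g_def assms(3) by simp
  have Vs: "V i j = V j i" for i j unfolding VE by (simp add: mult.commute)
    define W where "W = mat_inv_n n V"
    have pd: "strictly_pos_def_mat n V" unfolding V_def by (rule assms(8))
    note ip = inv_props[OF pd, folded W_def]
    have VW: "\<forall>i<n. \<forall>j<n. (\<Sum>k<n. V i k * W k j) = (if i = j then 1 else 0)" using ip by blast
    have WV: "\<And>i j. i < n \<Longrightarrow> j < n \<Longrightarrow> (\<Sum>k<n. W i k * integral\<^sup>L M (\<lambda>\<omega>. g k \<omega> * g j \<omega>)) = (if i = j then 1 else 0)"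
      using ip unfolding VE by blast
    have Ws: "\<And>i j. i < n \<Longrightarrow> j < n \<Longrightarrow> W i j = W j i" using W_sym[OF Vs VW] by blast
    have Cp: "bilin_n n W t t > 0" using C_pos[OF pd VW n] tpos[of 0] by simp
    have gp: "centered_gaussian_rv M (\<lambda>\<omega>. \<Sum>i<n. c i * g i \<omega>)" for c
      using assms(2) tpos unfolding centered_gaussian_process_def g_def
      by (metis less_imp_le)
    define T where "T = (\<lambda>\<omega>. bilin_n n W (\<lambda>i. g i \<omega>) (\<lambda>i. g i \<omega>) - (bilin_n n W t (\<lambda>i. g i \<omega>))^2 / bilin_n n W t t)"
    have mom: "integrable M T \<and> integrable M (\<lambda>\<omega>. T \<omega> ^ 2) \<and> integral\<^sup>L M T = real n - 1
         \<and> integral\<^sup>L M (\<lambda>\<omega>. T \<omega> ^ 2) = (real n)^2 - 1"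
      unfolding T_def by (rule moments_n[OF assms(1) gp WV]) (use Cp in auto)
    have Seq: "S n = (\<lambda>\<omega>. (\<sigma>\<^sup>2 / real n) * T \<omega>)"
    proof
      fix \<omega>
      define x where "x = (\<lambda>i. g i \<omega>)"
      define C where "C = bilin_n n W t t"
      define A where "A = bilin_n n W x x"
      define B where "B = bilin_n n W t x"
      have Xe: "(\<lambda>i. X (t i) \<omega>) = (\<lambda>i. \<mu> * t i + \<sigma> * x i)" unfolding assms(5) x_def g_def by simp
      have xt: "bilin_n n W x t = B" unfolding B_def by (rule bilin_sym[OF Ws])
      have XX: "bilin_n n W (\<lambda>i. \<mu> * t i + \<sigma> * x i) (\<lambda>i. \<mu> * t i + \<sigma> * x i) = \<mu>\<^sup>2 * C + 2 * \<mu> * \<sigma> * B + \<sigma>\<^sup>2 * A"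
        unfolding bilin_lin_left bilin_lin_right C_def[symmetric] A_def[symmetric] B_def[symmetric] xt
        by (simp add: algebra_simps power2_eq_square)
      have TX: "bilin_n n W t (\<lambda>i. \<mu> * t i + \<sigma> * x i) = \<mu> * C + \<sigma> * B"
        unfolding bilin_lin_right C_def[symmetric] B_def[symmetric] ..
      have Cne: "C \<noteq> 0" using Cp unfolding C_def by simp
      have "S n \<omega> = (1 / real n) * (((\<mu>\<^sup>2 * C + 2 * \<mu> * \<sigma> * B + \<sigma>\<^sup>2 * A) * C - (\<mu> * C + \<sigma> * B)\<^sup>2) / C)"
        unfolding assms(9) sigma2_hat_def Let_def V_def[symmetric] W_def[symmetric] Xe XX TX C_def ..
      also have "\<dots> = (\<sigma>\<^sup>2 / real n) * (A - B\<^sup>2 / C)"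
        using Cne by (simp add: field_simps power2_eq_square)
      also have "\<dots> = (\<sigma>\<^sup>2 / real n) * T \<omega>" unfolding T_def A_def B_def C_def x_def ..
      finally show "S n \<omega> = (\<sigma>\<^sup>2 / real n) * T \<omega>" .
    qed
    have e1: "expectation (S n) = \<sigma>\<^sup>2 * (real n - 1) / real n"
      unfolding Seq using mom by simp
    have sq: "(\<lambda>\<omega>. \<bar>S n \<omega> - \<sigma>\<^sup>2\<bar>\<^sup>2) = (\<lambda>\<omega>. (\<sigma>^4 / (real n)^2) * T \<omega> ^ 2 - (2 * \<sigma>^4 / real n) * T \<omega> + \<sigma>^4)"
      unfolding Seq using n by (auto simp: fun_eq_iff field_simps power2_eq_square power4_eq_xxxx)
    have "expectation (\<lambda>\<omega>. \<bar>S n \<omega> - \<sigma>\<^sup>2\<bar>\<^sup>2) = (\<sigma>^4 / (real n)^2) * ((real n)^2 - 1) - (2 * \<sigma>^4 / real n) * (real n - 1) + \<sigma>^4"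
      unfolding sq using mom by (simp add: prob_space)
    also have "\<dots> = \<sigma>^4 * (2 * real n - 1) / (real n)^2"
      using n by (simp add: field_simps power2_eq_square)
    finally show ?thesis using e1 by simp
qed

theorem lemma4p3:
  fixes M :: "'a measure" and G :: "real \<Rightarrow> 'a \<Rightarrow> real"
    and \<mu> \<sigma> :: real and t :: "nat \<Rightarrow> real"
  assumes "prob_space M"
    and "centered_gaussian_process M G"
    and "R = (\<lambda>s u. prob_space.expectation M (\<lambda>\<omega>. G s \<omega> * G u \<omega>))"
    and "\<sigma> > 0"
    and "X = (\<lambda>s \<omega>. \<mu> * s + \<sigma> * G s \<omega>)"
    and "t 0 > 0" and "strict_mono t"
    and "\<And>n. strictly_pos_def_mat n (\<lambda>i j. R (t i) (t j))"
    and "S = (\<lambda>n \<omega>. sigma2_hat R t n (\<lambda>i. X (t i) \<omega>))"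
  shows "((\<lambda>n. prob_space.expectation M (S n)) \<longlonglongrightarrow> \<sigma>\<^sup>2) \<and>
    ((\<lambda>n. prob_space.expectation M (\<lambda>\<omega>. \<bar>S n \<omega> - \<sigma>\<^sup>2\<bar>\<^sup>2)) \<longlonglongrightarrow> 0)"
proof -
  interpret prob_space M by fact
  have key: "expectation (S n) = \<sigma>\<^sup>2 * (real n - 1) / real n \<and>
     expectation (\<lambda>\<omega>. \<bar>S n \<omega> - \<sigma>\<^sup>2\<bar>\<^sup>2) = \<sigma>^4 * (2 * real n - 1) / (real n)^2" if n: "n > 0" for n
    by (rule key_n[OF assms(1-9) n])
  have l1: "(\<lambda>n. \<sigma>\<^sup>2 * (real n - 1) / real n) \<longlonglongrightarrow> \<sigma>\<^sup>2" by real_asymp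
  have l2: "(\<lambda>n. \<sigma>^4 * (2 * real n - 1) / (real n)^2) \<longlonglongrightarrow> 0" by real_asymp
  have ev1: "eventually (\<lambda>n. \<sigma>\<^sup>2 * (real n - 1) / real n = expectation (S n)) sequentially"
    by (rule eventually_mono[OF eventually_gt_at_top[of 0]]) (use key in simp)
  have ev2: "eventually (\<lambda>n. \<sigma>^4 * (2 * real n - 1) / (real n)^2 = expectation (\<lambda>\<omega>. \<bar>S n \<omega> - \<sigma>\<^sup>2\<bar>\<^sup>2)) sequentially"
    by (rule eventually_mono[OF eventually_gt_at_top[of 0]]) (use key in simp)
  show ?thesis using Lim_transform_eventually[OF l1 ev1] Lim_transform_eventually[OF l2 ev2] by simp
qed


end
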